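(* Let $G$ be a strongly connected directed co-graph with co-tree $T$, let $\hat{w}$ be an inner node of $T$, and let $R_{\hat{w}}\subseteq V(G_{\hat{w}})$ be a resolving set for $V(G_{\hat{w}})$ in $G$ such that $G_{\hat{w}}$ has a 1-vertex $u_1$ and a 2-vertex $u_2$ w.r.t. $R_{\hat{w}}$. Then there is no vertex $v\in V(G_{\hat{w}})\setminus\{u_1,u_2\}$ such that $R_{\hat{w}}\cup\{v\}$ is a resolving set for $V(G_{\hat{w}})$ in $G$ and $G_{\hat{w}}$ has neither a 1-vertex nor a 2-vertex w.r.t. $R_{\hat{w}}\cup\{v\}$.
   Context: All graphs are finite and simple. For vertices $u,v$ of a directed graph $G$, $d_G(u,v)$ is the length of a shortest directed path from $u$ to $v$ (undefined if none exists); $G$ is strongly connected if directed paths exist in both directions between any two vertices. A vertex $w$ resolves two distinct vertices $u,v$ in $G$ if $w=u$, or $w=v$, or there are paths from $w$ to $u$ and from $w$ to $v$ with $d_G(w,u)\neq d_G(w,v)$. For $U\subseteq V(G)$, a set $R\subseteq U$ is a resolving set for $U$ in $G$ if every pair of distinct vertices of $U$ is resolved in $G$ by some vertex of $R$. Directed co-graphs and co-trees: a single vertex $u$ is a directed co-graph whose co-tree is a single leaf associated with $u$. If $G_1,G_2$ are directed co-graphs on disjoint vertex sets with co-trees $T_1,T_2$, then the disjoint union (edge set $E(G_1)\cup E(G_2)$), the join (additionally all edges $(u,v),(v,u)$ with $u\in V(G_1),v\in V(G_2)$) and the directed join (additionally all edges $(u,v)$ with $u\in V(G_1),v\in V(G_2)$),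 each on vertex set $V(G_1)\cup V(G_2)$, are directed co-graphs; the co-tree is obtained by adding a new root (labelled by the operation) whose two successors are the roots of $T_1$ and $T_2$. Non-leaf nodes are inner nodes. For a node $\hat{w}$ of $T$, $G_{\hat{w}}$ is the subgraph of $G$ induced by the vertices associated with the leaves of the subtree rooted at $\hat{w}$. For a directed graph $H$ and a nonempty $R\subseteq V(H)$, a vertex $u\in V(H)\setminus R$ is a 1-vertex w.r.t. $R$ if $(w,u)\in E(H)$ for all $w\in R$, and a 2-vertex w.r.t. $R$ if $(w,u)\notin E(H)$ for all $w\in R$. *)

theory Defs
  imports Main
begin

datatype 'a cotree =
    Leaf 'a
  | DUnion "'a cotree" "'a cotree"
  | Join "'a cotree" "'a cotree"
  | DJoin "'a cotree" "'a cotree"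

fun leaves :: "'a cotree \<Rightarrow> 'a set" where
  "leaves (Leaf v) = {v}"
| "leaves (DUnion a b) = leaves a \<union> leaves b"
| "leaves (Join a b) = leaves a \<union> leaves b"
| "leaves (DJoin a b) = leaves a \<union> leaves b"

fun cotree_wf :: "'a cotree \<Rightarrow> bool" where
  "cotree_wf (Leaf v) = True"
| "cotree_wf (DUnion a b) = (cotree_wf a \<and> cotree_wf b \<and> leaves a \<inter> leaves b = {})"
| "cotree_wf (Join a b) = (cotree_wf a \<and> cotree_wf b \<and> leaves a \<inter> leaves b = {})"
| "cotree_wf (DJoin a b) = (cotree_wf a \<and> cotree_wf b \<and> leaves a \<inter> leaves b = {})"

fun cg_edges :: "'a cotree \<Rightarrow> ('a \<times> 'a) set" where
  "cg_edges (Leaf v) = {}"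
| "cg_edges (DUnion a b) = cg_edges a \<union> cg_edges b"
| "cg_edges (Join a b) = cg_edges a \<union> cg_edges b \<union> (leaves a \<times> leaves b) \<union> (leaves b \<times> leaves a)"
| "cg_edges (DJoin a b) = cg_edges a \<union> cg_edges b \<union> (leaves a \<times> leaves b)"

text \<open>Nodes of a co-tree, represented by the subtrees rooted at them.\<close>
fun subtrees :: "'a cotree \<Rightarrow> 'a cotree set" where
  "subtrees (Leaf v) = {Leaf v}"
| "subtrees (DUnion a b) = insert (DUnion a b) (subtrees a \<union> subtrees b)"
| "subtrees (Join a b) = insert (Join a b) (subtrees a \<union> subtrees b)"
| "subtrees (DJoin a b) = insert (DJoin a b) (subtrees a \<union> subtrees b)"

fun is_inner :: "'a cotree \<Rightarrow> bool" where
  "is_inner (Leaf v) = False"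
| "is_inner _ = True"

definition cotree_of :: "'a set \<Rightarrow> ('a \<times> 'a) set \<Rightarrow> 'a cotree \<Rightarrow> bool" where
  "cotree_of V E T \<longleftrightarrow> cotree_wf T \<and> V = leaves T \<and> E = cg_edges T"

definition strongly_connected :: "'a set \<Rightarrow> ('a \<times> 'a) set \<Rightarrow> bool" where
  "strongly_connected V E \<longleftrightarrow> (\<forall>u\<in>V. \<forall>v\<in>V. (u, v) \<in> E\<^sup>*)"

text \<open>Length of a shortest directed path (meaningful only when one exists).\<close>
definition dist :: "('a \<times> 'a) set \<Rightarrow> 'a \<Rightarrow> 'a \<Rightarrow> nat" where
  "dist E u v = (LEAST n. (u, v) \<in> E ^^ n)"

definition resolves :: "('a \<times> 'a) set \<Rightarrow> 'a \<Rightarrow> 'a \<Rightarrow> 'a \<Rightarrow> bool" where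
  "resolves E w u v \<longleftrightarrow> w = u \<or> w = v \<or>
     ((w, u) \<in> E\<^sup>* \<and> (w, v) \<in> E\<^sup>* \<and> dist E w u \<noteq> dist E w v)"

definition resolving_set :: "('a \<times> 'a) set \<Rightarrow> 'a set \<Rightarrow> 'a set \<Rightarrow> bool" where
  "resolving_set E U R \<longleftrightarrow> R \<subseteq> U \<and>
     (\<forall>u\<in>U. \<forall>v\<in>U. u \<noteq> v \<longrightarrow> (\<exists>w\<in>R. resolves E w u v))"

definition induced_edges :: "('a \<times> 'a) set \<Rightarrow> 'a set \<Rightarrow> ('a \<times> 'a) set" where
  "induced_edges E W = E \<inter> (W \<times> W)"

definition one_vertex :: "'a set \<Rightarrow> ('a \<times> 'a) set \<Rightarrow> 'a set \<Rightarrow> 'a \<Rightarrow> bool" where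
  "one_vertex VH EH R u \<longleftrightarrow> R \<noteq> {} \<and> u \<in> VH - R \<and> (\<forall>w\<in>R. (w, u) \<in> EH)"

definition two_vertex :: "'a set \<Rightarrow> ('a \<times> 'a) set \<Rightarrow> 'a set \<Rightarrow> 'a \<Rightarrow> bool" where
  "two_vertex VH EH R u \<longleftrightarrow> R \<noteq> {} \<and> u \<in> VH - R \<and> (\<forall>w\<in>R. (w, u) \<notin> EH)"

end

theory Submission
  imports Defs
begin


lemma leaves_ne: "leaves t \<noteq> {}"
  by (induction t) auto

lemma edges_sub: "cg_edges t \<subseteq> leaves t \<times> leaves t"
  by (induction t) auto

lemma sub_wf: "s \<in> subtrees t \<Longrightarrow> cotree_wf t \<Longrightarrow> cotree_wf s"
  by (induction t) auto

lemma sub_leaves: "s \<in> subtrees t \<Longrightarrow> leaves s \<subseteq> leaves t"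
  by (induction t) auto

lemma sub_edges: "s \<in> subtrees t \<Longrightarrow> cotree_wf t \<Longrightarrow> x \<in> leaves s \<Longrightarrow> y \<in> leaves s
  \<Longrightarrow> (x,y) \<in> cg_edges t \<longleftrightarrow> (x,y) \<in> cg_edges s"
proof (induction t)
  case (Leaf z) then show ?case by auto
next
  case (DUnion a b)
  have "s = DUnion a b \<or> s \<in> subtrees a \<or> s \<in> subtrees b" using DUnion.prems by auto
  then show ?case
  proof (elim disjE)
    assume sa: "s \<in> subtrees a"
    hence "x \<in> leaves a" "y \<in> leaves a" using sub_leaves DUnion.prems by auto
    hence "(x,y) \<notin> cg_edges b" using edges_sub[of b] DUnion.prems by auto
    thus ?thesis using DUnion.IH(1)[OF sa] DUnion.prems by auto
  next
    assume sa: "s \<in> subtrees b"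
    hence "x \<in> leaves b" "y \<in> leaves b" using sub_leaves DUnion.prems by auto
    hence "(x,y) \<notin> cg_edges a" using edges_sub[of a] DUnion.prems by auto
    thus ?thesis using DUnion.IH(2)[OF sa] DUnion.prems by auto
  qed simp
next
  case (Join a b)
  have "s = Join a b \<or> s \<in> subtrees a \<or> s \<in> subtrees b" using Join.prems by auto
  then show ?case
  proof (elim disjE)
    assume sa: "s \<in> subtrees a"
    hence "x \<in> leaves a" "y \<in> leaves a" using sub_leaves Join.prems by auto
    hence "(x,y) \<notin> cg_edges b" "x \<notin> leaves b" "y \<notin> leaves b" using edges_sub[of b] Join.prems by auto
    thus ?thesis using Join.IH(1)[OF sa] Join.prems by auto
  next
    assume sa: "s \<in> subtrees b"
    hence "x \<in> leaves b" "y \<in> leaves b" using sub_leaves Join.prems by auto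
    hence "(x,y) \<notin> cg_edges a" "x \<notin> leaves a" "y \<notin> leaves a" using edges_sub[of a] Join.prems by auto
    thus ?thesis using Join.IH(2)[OF sa] Join.prems by auto
  qed simp
next
  case (DJoin a b)
  have "s = DJoin a b \<or> s \<in> subtrees a \<or> s \<in> subtrees b" using DJoin.prems by auto
  then show ?case
  proof (elim disjE)
    assume sa: "s \<in> subtrees a"
    hence "x \<in> leaves a" "y \<in> leaves a" using sub_leaves DJoin.prems by auto
    hence "(x,y) \<notin> cg_edges b" "x \<notin> leaves b" "y \<notin> leaves b" using edges_sub[of b] DJoin.prems by auto
    thus ?thesis using DJoin.IH(1)[OF sa] DJoin.prems by auto
  next
    assume sa: "s \<in> subtrees b"
    hence "x \<in> leaves b" "y \<in> leaves b" using sub_leaves DJoin.prems by auto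
    hence "(x,y) \<notin> cg_edges a" "x \<notin> leaves a" "y \<notin> leaves a" using edges_sub[of a] DJoin.prems by auto
    thus ?thesis using DJoin.IH(2)[OF sa] DJoin.prems by auto
  qed simp
qed


definition good :: "('a \<times> 'a) set \<Rightarrow> 'a set \<Rightarrow> bool" where
  "good e S \<longleftrightarrow> (\<forall>R u1 u2 v. R \<subseteq> S \<longrightarrow> R \<noteq> {} \<longrightarrow> u1 \<in> S \<longrightarrow> u2 \<in> S \<longrightarrow> v \<in> S
     \<longrightarrow> v \<notin> R \<longrightarrow> (\<forall>r\<in>R. (r,u1) \<in> e \<and> (r,u2) \<notin> e) \<longrightarrow> (v,u2) \<in> e \<longrightarrow> (v,u1) \<notin> e
     \<longrightarrow> ((\<forall>r\<in>R. (r,v) \<in> e \<longleftrightarrow> (r,u1) \<in> e) \<or> (\<forall>r\<in>R. (r,v) \<in> e \<longleftrightarrow> (r,u2) \<in> e)))"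


lemma goodD:
  assumes "good e S" "R \<subseteq> S" "R \<noteq> {}" "u1 \<in> S" "u2 \<in> S" "v \<in> S" "v \<notin> R"
    "\<forall>r\<in>R. (r,u1) \<in> e \<and> (r,u2) \<notin> e" "(v,u2) \<in> e" "(v,u1) \<notin> e"
  shows "(\<forall>r\<in>R. (r,v) \<in> e \<longleftrightarrow> (r,u1) \<in> e) \<or> (\<forall>r\<in>R. (r,v) \<in> e \<longleftrightarrow> (r,u2) \<in> e)"
proof -
  have H: "R \<subseteq> S \<longrightarrow> R \<noteq> {} \<longrightarrow> u1 \<in> S \<longrightarrow> u2 \<in> S \<longrightarrow> v \<in> S
     \<longrightarrow> v \<notin> R \<longrightarrow> (\<forall>r\<in>R. (r,u1) \<in> e \<and> (r,u2) \<notin> e) \<longrightarrow> (v,u2) \<in> e \<longrightarrow> (v,u1) \<notin> e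
     \<longrightarrow> ((\<forall>r\<in>R. (r,v) \<in> e \<longleftrightarrow> (r,u1) \<in> e) \<or> (\<forall>r\<in>R. (r,v) \<in> e \<longleftrightarrow> (r,u2) \<in> e))"
    using spec[OF spec[OF spec[OF spec[OF assms(1)[unfolded good_def], of R], of u1], of u2], of v] .
  show ?thesis using mp[OF mp[OF mp[OF mp[OF mp[OF mp[OF mp[OF mp[OF mp[OF H assms(2)] assms(3)] assms(4)] assms(5)] assms(6)] assms(7)] assms(8)] assms(9)] assms(10)] .
qed

lemma good_cong:
  assumes "\<forall>x\<in>S. \<forall>y\<in>S. (x,y) \<in> e \<longleftrightarrow> (x,y) \<in> e'" and "good e S"
  shows "good e' S"
  unfolding good_def
proof (intro allI impI)
  fix R u1 u2 v
  assume h: "R \<subseteq> S" "R \<noteq> {}" "u1 \<in> S" "u2 \<in> S" "v \<in> S" "v \<notin> R"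
    "\<forall>r\<in>R. (r,u1) \<in> e' \<and> (r,u2) \<notin> e'" "(v,u2) \<in> e'" "(v,u1) \<notin> e'"
  have eq: "\<And>x y. x \<in> S \<Longrightarrow> y \<in> S \<Longrightarrow> (x,y) \<in> e \<longleftrightarrow> (x,y) \<in> e'" using assms(1) by blast
  have eqR: "\<And>r. r \<in> R \<Longrightarrow> ((r,v) \<in> e \<longleftrightarrow> (r,v) \<in> e') \<and> ((r,u1) \<in> e \<longleftrightarrow> (r,u1) \<in> e')
      \<and> ((r,u2) \<in> e \<longleftrightarrow> (r,u2) \<in> e')"
  proof -
    fix r assume "r \<in> R"
    then have "r \<in> S" using h(1) by blast
    then show "?thesis r" using eq h(3,4,5) by blast
  qed
  have h7: "\<forall>r\<in>R. (r,u1) \<in> e \<and> (r,u2) \<notin> e" using h(7) eqR by blast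
  have h8: "(v,u2) \<in> e" "(v,u1) \<notin> e" using h(3,4,5,8,9) eq by blast+
  have "(\<forall>r\<in>R. (r,v) \<in> e \<longleftrightarrow> (r,u1) \<in> e) \<or> (\<forall>r\<in>R. (r,v) \<in> e \<longleftrightarrow> (r,u2) \<in> e)"
    by (rule goodD[OF assms(2) h(1-6) h7 h8])
  then show "(\<forall>r\<in>R. (r,v) \<in> e' \<longleftrightarrow> (r,u1) \<in> e') \<or> (\<forall>r\<in>R. (r,v) \<in> e' \<longleftrightarrow> (r,u2) \<in> e')"
  proof
    assume "\<forall>r\<in>R. (r,v) \<in> e \<longleftrightarrow> (r,u1) \<in> e"
    then have "\<forall>r\<in>R. (r,v) \<in> e' \<longleftrightarrow> (r,u1) \<in> e'" using eqR by blast
    then show ?thesis by blast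
  next
    assume "\<forall>r\<in>R. (r,v) \<in> e \<longleftrightarrow> (r,u2) \<in> e"
    then have "\<forall>r\<in>R. (r,v) \<in> e' \<longleftrightarrow> (r,u2) \<in> e'" using eqR by blast
    then show ?thesis by blast
  qed
qed

lemma good_leaf: "good e {z}"
  unfolding good_def by auto



lemma good_step:
  assumes d: "A \<inter> B = {}" and gA: "good e A" and gB: "good e B"
    and c1: "\<forall>x\<in>A. \<forall>y\<in>B. (x,y) \<in> e \<longleftrightarrow> c1"
    and c2: "\<forall>x\<in>B. \<forall>y\<in>A. (x,y) \<in> e \<longleftrightarrow> c2"
  shows "good e (A \<union> B)"
  unfolding good_def
proof (intro allI impI)
  fix R u1 u2 v
  assume hR: "R \<subseteq> A \<union> B" and hne: "R \<noteq> {}" and hu1: "u1 \<in> A \<union> B" and hu2: "u2 \<in> A \<union> B"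
    and hv: "v \<in> A \<union> B" and hvR: "v \<notin> R"
    and hr: "\<forall>r\<in>R. (r,u1) \<in> e \<and> (r,u2) \<notin> e" and hv2: "(v,u2) \<in> e" and hv1: "(v,u1) \<notin> e"
  have C1: "\<And>x y. x \<in> A \<Longrightarrow> y \<in> B \<Longrightarrow> (x,y) \<in> e \<longleftrightarrow> c1" using c1 by blast
  have C2: "\<And>x y. x \<in> B \<Longrightarrow> y \<in> A \<Longrightarrow> (x,y) \<in> e \<longleftrightarrow> c2" using c2 by blast
  have hr1: "\<And>r. r \<in> R \<Longrightarrow> (r,u1) \<in> e" and hr2: "\<And>r. r \<in> R \<Longrightarrow> (r,u2) \<notin> e" using hr by auto
  have rAB: "\<And>r. r \<in> R \<Longrightarrow> r \<in> A \<or> r \<in> B" using hR by blast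
  have vAB: "v \<in> A \<or> v \<in> B" using hv by blast
  obtain r0 where r0: "r0 \<in> R" using hne by blast
  show "(\<forall>r\<in>R. (r,v) \<in> e \<longleftrightarrow> (r,u1) \<in> e) \<or> (\<forall>r\<in>R. (r,v) \<in> e \<longleftrightarrow> (r,u2) \<in> e)"
  proof (cases "u1 \<in> A")
    case u1A: True
    show ?thesis
    proof (cases "u2 \<in> A")
      case u2A: True
      have RA: "R \<subseteq> A"
      proof
        fix r assume r: "r \<in> R"
        show "r \<in> A"
        proof (rule ccontr)
          assume "r \<notin> A"
          then have rB: "r \<in> B" using rAB r by blast
          have "(r,u1) \<in> e \<longleftrightarrow> (r,u2) \<in> e" using C2[OF rB u1A] C2[OF rB u2A] by simp
          then show False using hr1[OF r] hr2[OF r] by simp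
        qed
      qed
      have vA: "v \<in> A"
      proof (rule ccontr)
        assume "v \<notin> A"
        then have vB: "v \<in> B" using vAB by blast
        have "(v,u1) \<in> e \<longleftrightarrow> (v,u2) \<in> e" using C2[OF vB u1A] C2[OF vB u2A] by simp
        then show False using hv1 hv2 by simp
      qed
      show ?thesis by (rule goodD[OF gA RA hne u1A u2A vA hvR hr hv2 hv1])
    next
      case False
      hence u2B: "u2 \<in> B" using hu2 by blast
      have rA: "\<And>r. r \<in> R \<Longrightarrow> r \<in> A \<Longrightarrow> \<not> c1" using C1 u2B hr2 by metis
      have rB: "\<And>r. r \<in> R \<Longrightarrow> r \<in> B \<Longrightarrow> c2" using C2 u1A hr1 by metis
      have vA: "v \<in> A \<Longrightarrow> c1" using C1 u2B hv2 by metis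
      have vB: "v \<in> B \<Longrightarrow> \<not> c2" using C2 u1A hv1 by metis
      show ?thesis
      proof (cases "r0 \<in> A")
        case True
        hence nc1: "\<not> c1" using rA r0 by blast
        hence vB': "v \<in> B" using vA vAB by blast
        hence nc2: "\<not> c2" using vB by blast
        have "\<forall>r\<in>R. (r,v) \<notin> e"
        proof
          fix r assume r: "r \<in> R"
          have "r \<in> A" using rAB[OF r] rB[OF r] nc2 by blast
          then show "(r,v) \<notin> e" using C1 vB' nc1 by blast
        qed
        thus ?thesis using hr2 by blast
      next
        case False
        hence r0B: "r0 \<in> B" using rAB r0 by blast
        hence nc2: "c2" using rB r0 by blast
        hence vA': "v \<in> A" using vB vAB by blast
        hence nc1: "c1" using vA by blast
        have "\<forall>r\<in>R. (r,v) \<in> e"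
        proof
          fix r assume r: "r \<in> R"
          have "r \<in> B" using rAB[OF r] rA[OF r] nc1 by blast
          then show "(r,v) \<in> e" using C2 vA' nc2 by blast
        qed
        thus ?thesis using hr1 by blast
      qed
    qed
  next
    case False
    hence u1B: "u1 \<in> B" using hu1 by blast
    show ?thesis
    proof (cases "u2 \<in> B")
      case u2B: True
      have RB: "R \<subseteq> B"
      proof
        fix r assume r: "r \<in> R"
        show "r \<in> B"
        proof (rule ccontr)
          assume "r \<notin> B"
          then have rA: "r \<in> A" using rAB r by blast
          have "(r,u1) \<in> e \<longleftrightarrow> (r,u2) \<in> e" using C1[OF rA u1B] C1[OF rA u2B] by simp
          then show False using hr1[OF r] hr2[OF r] by simp
        qed
      qed
      have vB: "v \<in> B"
      proof (rule ccontr)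
        assume "v \<notin> B"
        then have vA: "v \<in> A" using vAB by blast
        have "(v,u1) \<in> e \<longleftrightarrow> (v,u2) \<in> e" using C1[OF vA u1B] C1[OF vA u2B] by simp
        then show False using hv1 hv2 by simp
      qed
      show ?thesis by (rule goodD[OF gB RB hne u1B u2B vB hvR hr hv2 hv1])
    next
      case False
      hence u2A: "u2 \<in> A" using hu2 by blast
      have rB: "\<And>r. r \<in> R \<Longrightarrow> r \<in> B \<Longrightarrow> \<not> c2" using C2 u2A hr2 by metis
      have rA: "\<And>r. r \<in> R \<Longrightarrow> r \<in> A \<Longrightarrow> c1" using C1 u1B hr1 by metis
      have vB: "v \<in> B \<Longrightarrow> c2" using C2 u2A hv2 by metis
      have vA: "v \<in> A \<Longrightarrow> \<not> c1" using C1 u1B hv1 by metis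
      show ?thesis
      proof (cases "r0 \<in> B")
        case True
        hence nc2: "\<not> c2" using rB r0 by blast
        hence vA': "v \<in> A" using vB vAB by blast
        hence nc1: "\<not> c1" using vA by blast
        have "\<forall>r\<in>R. (r,v) \<notin> e"
        proof
          fix r assume r: "r \<in> R"
          have "r \<in> B" using rAB[OF r] rA[OF r] nc1 by blast
          then show "(r,v) \<notin> e" using C2 vA' nc2 by blast
        qed
        thus ?thesis using hr2 by blast
      next
        case False
        hence r0A: "r0 \<in> A" using rAB r0 by blast
        hence nc1: "c1" using rA r0 by blast
        hence vB': "v \<in> B" using vA vAB by blast
        hence nc2: "c2" using vB by blast
        have "\<forall>r\<in>R. (r,v) \<in> e"
        proof
          fix r assume r: "r \<in> R"
          have "r \<in> A" using rAB[OF r] rB[OF r] nc2 by blast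
          then show "(r,v) \<in> e" using C1 vB' nc1 by blast
        qed
        thus ?thesis using hr1 by blast
      qed
    qed
  qed
qed



lemma key: "cotree_wf t \<Longrightarrow> good (cg_edges t) (leaves t)"
proof (induction t)
  case (Leaf z) then show ?case using good_leaf by simp
next
  case (DUnion a b)
  have wf: "cotree_wf a" "cotree_wf b" "leaves a \<inter> leaves b = {}" using DUnion.prems by auto
  have ea: "cg_edges a \<subseteq> leaves a \<times> leaves a" and eb: "cg_edges b \<subseteq> leaves b \<times> leaves b"
    using edges_sub by auto
  have dj: "\<And>z. z \<in> leaves a \<Longrightarrow> z \<notin> leaves b" using wf(3) by blast
  have gA: "good (cg_edges (DUnion a b)) (leaves a)"
    by (rule good_cong[OF _ DUnion.IH(1)[OF wf(1)]]) (use eb dj in auto)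
  have gB: "good (cg_edges (DUnion a b)) (leaves b)"
    by (rule good_cong[OF _ DUnion.IH(2)[OF wf(2)]]) (use ea dj in auto)
  have c1: "\<forall>x\<in>leaves a. \<forall>y\<in>leaves b. (x,y) \<in> cg_edges (DUnion a b) \<longleftrightarrow> False"
    using ea eb dj by auto
  have c2: "\<forall>x\<in>leaves b. \<forall>y\<in>leaves a. (x,y) \<in> cg_edges (DUnion a b) \<longleftrightarrow> False"
    using ea eb dj by auto
  show ?case using good_step[OF wf(3) gA gB c1 c2] by simp
next
  case (Join a b)
  have wf: "cotree_wf a" "cotree_wf b" "leaves a \<inter> leaves b = {}" using Join.prems by auto
  have ea: "cg_edges a \<subseteq> leaves a \<times> leaves a" and eb: "cg_edges b \<subseteq> leaves b \<times> leaves b"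
    using edges_sub by auto
  have dj: "\<And>z. z \<in> leaves a \<Longrightarrow> z \<notin> leaves b" using wf(3) by blast
  have gA: "good (cg_edges (Join a b)) (leaves a)"
    by (rule good_cong[OF _ Join.IH(1)[OF wf(1)]]) (use eb dj in auto)
  have gB: "good (cg_edges (Join a b)) (leaves b)"
    by (rule good_cong[OF _ Join.IH(2)[OF wf(2)]]) (use ea dj in auto)
  have c1: "\<forall>x\<in>leaves a. \<forall>y\<in>leaves b. (x,y) \<in> cg_edges (Join a b) \<longleftrightarrow> True"
    by simp
  have c2: "\<forall>x\<in>leaves b. \<forall>y\<in>leaves a. (x,y) \<in> cg_edges (Join a b) \<longleftrightarrow> True"
    by simp
  show ?case using good_step[OF wf(3) gA gB c1 c2] by simp
next
  case (DJoin a b)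
  have wf: "cotree_wf a" "cotree_wf b" "leaves a \<inter> leaves b = {}" using DJoin.prems by auto
  have ea: "cg_edges a \<subseteq> leaves a \<times> leaves a" and eb: "cg_edges b \<subseteq> leaves b \<times> leaves b"
    using edges_sub by auto
  have dj: "\<And>z. z \<in> leaves a \<Longrightarrow> z \<notin> leaves b" using wf(3) by blast
  have gA: "good (cg_edges (DJoin a b)) (leaves a)"
    by (rule good_cong[OF _ DJoin.IH(1)[OF wf(1)]]) (use eb dj in auto)
  have gB: "good (cg_edges (DJoin a b)) (leaves b)"
    by (rule good_cong[OF _ DJoin.IH(2)[OF wf(2)]]) (use ea dj in auto)
  have c1: "\<forall>x\<in>leaves a. \<forall>y\<in>leaves b. (x,y) \<in> cg_edges (DJoin a b) \<longleftrightarrow> True"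
    by simp
  have c2: "\<forall>x\<in>leaves b. \<forall>y\<in>leaves a. (x,y) \<in> cg_edges (DJoin a b) \<longleftrightarrow> False"
    using ea eb dj by auto
  show ?case using good_step[OF wf(3) gA gB c1 c2] by simp
qed



lemma closed_a:
  assumes "(p,q) \<in> E\<^sup>*" "p \<in> A" "\<And>x y. (x,y) \<in> E \<Longrightarrow> x \<in> A \<Longrightarrow> y \<in> A"
  shows "q \<in> A"
  using assms(1,2) by (induction rule: rtrancl_induct) (use assms(3) in blast)+

lemma diam:
  assumes wf: "cotree_wf T" and sc: "strongly_connected (leaves T) (cg_edges T)"
    and xy: "x \<in> leaves T" "y \<in> leaves T" "x \<noteq> y" "(x,y) \<notin> cg_edges T"
  shows "(x,y) \<in> cg_edges T O cg_edges T"
proof (cases T)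
  case (Leaf z) then show ?thesis using xy by simp
next
  case (DUnion a b)
  obtain p where p: "p \<in> leaves a" using leaves_ne[of a] by blast
  obtain q where q: "q \<in> leaves b" using leaves_ne[of b] by blast
  have dj: "leaves a \<inter> leaves b = {}" using wf DUnion by simp
  have "p \<in> leaves T" "q \<in> leaves T" using p q DUnion by simp_all
  then have pq: "(p,q) \<in> (cg_edges T)\<^sup>*" using sc unfolding strongly_connected_def by blast
  have cl: "\<And>x y. (x,y) \<in> cg_edges T \<Longrightarrow> x \<in> leaves a \<Longrightarrow> y \<in> leaves a"
  proof -
    fix x y assume e: "(x,y) \<in> cg_edges T" and xa: "x \<in> leaves a"
    have "(x,y) \<in> cg_edges a \<or> (x,y) \<in> cg_edges b" using e DUnion by simp
    then show "y \<in> leaves a"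
    proof
      assume "(x,y) \<in> cg_edges a" then show ?thesis using edges_sub[of a] by blast
    next
      assume "(x,y) \<in> cg_edges b" then have "x \<in> leaves b" using edges_sub[of b] by blast
      then show ?thesis using xa dj by blast
    qed
  qed
  have "q \<in> leaves a" by (rule closed_a[OF pq p cl])
  then show ?thesis using q dj by blast
next
  case (DJoin a b)
  obtain p where p: "p \<in> leaves a" using leaves_ne[of a] by blast
  obtain q where q: "q \<in> leaves b" using leaves_ne[of b] by blast
  have dj: "leaves a \<inter> leaves b = {}" using wf DJoin by simp
  have "p \<in> leaves T" "q \<in> leaves T" using p q DJoin by simp_all
  then have pq: "(q,p) \<in> (cg_edges T)\<^sup>*" using sc unfolding strongly_connected_def by blast
  have cl: "\<And>x y. (x,y) \<in> cg_edges T \<Longrightarrow> x \<in> leaves b \<Longrightarrow> y \<in> leaves b"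
  proof -
    fix x y assume e: "(x,y) \<in> cg_edges T" and xb: "x \<in> leaves b"
    have "(x,y) \<in> cg_edges a \<or> (x,y) \<in> cg_edges b \<or> (x,y) \<in> leaves a \<times> leaves b" using e DJoin by simp
    then show "y \<in> leaves b"
    proof (elim disjE)
      assume "(x,y) \<in> cg_edges b" then show ?thesis using edges_sub[of b] by blast
    next
      assume "(x,y) \<in> cg_edges a" then have "x \<in> leaves a" using edges_sub[of a] by blast
      then show ?thesis using xb dj by blast
    next
      assume "(x,y) \<in> leaves a \<times> leaves b" then show ?thesis by blast
    qed
  qed
  have "p \<in> leaves b" by (rule closed_a[OF pq q cl])
  then show ?thesis using p dj by blast
next
  case (Join a b)
  obtain p where p: "p \<in> leaves a" using leaves_ne[of a] by blast
  obtain q where q: "q \<in> leaves b" using leaves_ne[of b] by blast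
  have E: "cg_edges T = cg_edges a \<union> cg_edges b \<union> (leaves a \<times> leaves b) \<union> (leaves b \<times> leaves a)"
    using Join by simp
  have L: "leaves T = leaves a \<union> leaves b" using Join by simp
  have "(x \<in> leaves a \<and> y \<in> leaves a) \<or> (x \<in> leaves b \<and> y \<in> leaves b)"
    using xy(1,2,4) unfolding E L by blast
  then show ?thesis
  proof
    assume "x \<in> leaves a \<and> y \<in> leaves a"
    then have "(x,q) \<in> cg_edges T" "(q,y) \<in> cg_edges T" using q unfolding E by blast+
    then show ?thesis by blast
  next
    assume "x \<in> leaves b \<and> y \<in> leaves b"
    then have "(x,p) \<in> cg_edges T" "(p,y) \<in> cg_edges T" using p unfolding E by blast+
    then show ?thesis by blast
  qed
qed


lemma dist1: "(x,y) \<in> E \<Longrightarrow> x \<noteq> y \<Longrightarrow> dist E x y = 1"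
  unfolding dist_def
proof (rule Least_equality)
  assume "(x,y) \<in> E" "x \<noteq> y"
  then show "(x,y) \<in> E ^^ 1" by simp
next
  fix n assume "(x,y) \<in> E ^^ n" "x \<noteq> y"
  then show "1 \<le> n" by (cases n) auto
qed

lemma dist2: "(x,y) \<in> E O E \<Longrightarrow> (x,y) \<notin> E \<Longrightarrow> x \<noteq> y \<Longrightarrow> dist E x y = 2"
  unfolding dist_def
proof (rule Least_equality)
  assume "(x,y) \<in> E O E"
  then show "(x,y) \<in> E ^^ 2" by (simp add: numeral_2_eq_2)
next
  fix n assume "(x,y) \<in> E ^^ n" "x \<noteq> y" "(x,y) \<notin> E"
  then show "2 \<le> n"
  proof (cases n)
    case (Suc m) with \<open>(x,y) \<in> E ^^ n\<close> \<open>x \<noteq> y\<close> \<open>(x,y) \<notin> E\<close> show ?thesis by (cases m) auto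
  qed auto
qed

theorem lemma3:
  fixes V :: "'a set" and E :: "('a \<times> 'a) set" and T w :: "'a cotree"
    and R :: "'a set" and u1 u2 :: 'a
  assumes "cotree_of V E T"
    and "strongly_connected V E"
    and "w \<in> subtrees T" and "is_inner w"
    and "resolving_set E (leaves w) R"
    and "one_vertex (leaves w) (induced_edges E (leaves w)) R u1"
    and "two_vertex (leaves w) (induced_edges E (leaves w)) R u2"
  shows "\<not> (\<exists>v \<in> leaves w - {u1, u2}.
            resolving_set E (leaves w) (insert v R) \<and>
            \<not> (\<exists>x. one_vertex (leaves w) (induced_edges E (leaves w)) (insert v R) x) \<and>
            \<not> (\<exists>x. two_vertex (leaves w) (induced_edges E (leaves w)) (insert v R) x))"
proof
  assume "\<exists>v \<in> leaves w - {u1, u2}.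
            resolving_set E (leaves w) (insert v R) \<and>
            \<not> (\<exists>x. one_vertex (leaves w) (induced_edges E (leaves w)) (insert v R) x) \<and>
            \<not> (\<exists>x. two_vertex (leaves w) (induced_edges E (leaves w)) (insert v R) x)"
  then obtain v where v: "v \<in> leaves w" "v \<noteq> u1" "v \<noteq> u2"
    and n1: "\<not> one_vertex (leaves w) (induced_edges E (leaves w)) (insert v R) u1"
    and n2: "\<not> two_vertex (leaves w) (induced_edges E (leaves w)) (insert v R) u2"
    by blast
  have wf: "cotree_wf T" and VT: "V = leaves T" and ET: "E = cg_edges T"
    using assms(1) unfolding cotree_of_def by auto
  have wfw: "cotree_wf w" using sub_wf assms(3) wf by blast
  have LW: "leaves w \<subseteq> V" using sub_leaves assms(3) VT by blast
  have eqw: "\<forall>x\<in>leaves w. \<forall>y\<in>leaves w. (x,y) \<in> cg_edges w \<longleftrightarrow> (x,y) \<in> E"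
    using sub_edges[OF assms(3) wf] unfolding ET by blast
  have EH: "\<And>x y. x \<in> leaves w \<Longrightarrow> y \<in> leaves w \<Longrightarrow> (x,y) \<in> induced_edges E (leaves w) \<longleftrightarrow> (x,y) \<in> E"
    unfolding induced_edges_def by auto
  have R: "R \<noteq> {}" "u1 \<in> leaves w" "u1 \<notin> R" "\<forall>r\<in>R. (r,u1) \<in> E"
    "u2 \<in> leaves w" "u2 \<notin> R" "\<forall>r\<in>R. (r,u2) \<notin> E"
    using assms(6,7) unfolding one_vertex_def two_vertex_def induced_edges_def by auto
  have RW: "R \<subseteq> leaves w" using assms(5) unfolding resolving_set_def by blast
  have vR: "v \<notin> R"
  proof
    assume "v \<in> R"
    then have "insert v R = R" by blast
    then show False using n1 assms(6) by simp
  qed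
  have vu1: "(v,u1) \<notin> E"
  proof
    assume "(v,u1) \<in> E"
    then have "one_vertex (leaves w) (induced_edges E (leaves w)) (insert v R) u1"
      using assms(6) v R EH unfolding one_vertex_def by auto
    then show False using n1 by blast
  qed
  have vu2: "(v,u2) \<in> E"
  proof (rule ccontr)
    assume "(v,u2) \<notin> E"
    then have "two_vertex (leaves w) (induced_edges E (leaves w)) (insert v R) u2"
      using assms(7) v R EH unfolding two_vertex_def by auto
    then show False using n2 by blast
  qed
  have g: "good E (leaves w)" using good_cong[OF eqw key[OF wfw]] .
  have C: "(\<forall>r\<in>R. (r,v) \<in> E \<longleftrightarrow> (r,u1) \<in> E) \<or> (\<forall>r\<in>R. (r,v) \<in> E \<longleftrightarrow> (r,u2) \<in> E)"
    by (rule goodD[OF g RW R(1) R(2) R(5) v(1) vR _ vu2 vu1]) (use R(4,7) in blast)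
  then show False
  proof
    assume c: "\<forall>r\<in>R. (r,v) \<in> E \<longleftrightarrow> (r,u1) \<in> E"
    obtain r where r: "r \<in> R" "resolves E r v u1"
      using assms(5) v(1,2) R(2) unfolding resolving_set_def by blast
    have "r \<noteq> v" "r \<noteq> u1" using r vR R by auto
    moreover have "(r,v) \<in> E" "(r,u1) \<in> E" using c r R by auto
    ultimately have "dist E r v = 1" "dist E r u1 = 1" by (simp_all add: dist1)
    then show False using r(2) \<open>r \<noteq> v\<close> \<open>r \<noteq> u1\<close> unfolding resolves_def by simp
  next
    assume c: "\<forall>r\<in>R. (r,v) \<in> E \<longleftrightarrow> (r,u2) \<in> E"
    obtain r where r: "r \<in> R" "resolves E r v u2"
      using assms(5) v(1,3) R(5) unfolding resolving_set_def by blast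
    have ne: "r \<noteq> v" "r \<noteq> u2" using r vR R by auto
    have ne2: "(r,v) \<notin> E" "(r,u2) \<notin> E" using c r R by auto
    have LT: "leaves w \<subseteq> leaves T" using LW VT by simp
    have rV: "r \<in> leaves T" "v \<in> leaves T" "u2 \<in> leaves T"
      using r(1) RW v(1) R(5) LT by blast+
    have sc: "strongly_connected (leaves T) (cg_edges T)" using assms(2) unfolding VT ET .
    have "(r,v) \<notin> cg_edges T" using ne2(1) unfolding ET .
    then have "(r,v) \<in> cg_edges T O cg_edges T" by (rule diam[OF wf sc rV(1) rV(2) ne(1)])
    then have "(r,v) \<in> E O E" unfolding ET .
    then have d1: "dist E r v = 2" by (rule dist2[OF _ ne2(1) ne(1)])
    have "(r,u2) \<notin> cg_edges T" using ne2(2) unfolding ET .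
    then have "(r,u2) \<in> cg_edges T O cg_edges T" by (rule diam[OF wf sc rV(1) rV(3) ne(2)])
    then have "(r,u2) \<in> E O E" unfolding ET .
    then have d2: "dist E r u2 = 2" by (rule dist2[OF _ ne2(2) ne(2)])
    then show False using r(2) ne d1 d2 unfolding resolves_def by simp
  qed
qed

end
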